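(* Let $\mathcal{C}$ be a binary linear code with minimum distance $d(\mathcal{C}) \ge 3$. Then $$\rho(\mathcal{C}) \le \binom{r(\mathcal{C})}{1} + \binom{r(\mathcal{C})}{2} + \cdots + \binom{r(\mathcal{C})}{d(\mathcal{C})-2}.$$
   Context: A parity-check matrix for a linear code $\mathcal{C}$ is any matrix (possibly with linearly dependent rows) whose rows span the dual code $\mathcal{C}^\perp$. $d(\mathcal{C})$ is the minimum Hamming distance. For a parity-check matrix $H$, the stopping distance $s(H)$ is the largest integer such that for every set of $s(H)-1$ or fewer columns of $H$, the projection of $H$ onto those columns contains at least one row of Hamming weight exactly one. The redundancy $r(\mathcal{C})$ is the minimum number of rows of a parity-check matrix for $\mathcal{C}$. The stopping redundancy $\rho(\mathcal{C})$ is the smallest number of rows of a parity-check matrix $H$ for $\mathcal{C}$ with $s(H) = d(\mathcal{C})$. *)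

theory Defs
  imports Main "HOL-Library.Z2" "HOL-Library.Function_Algebras"
begin

text \<open>Binary vectors of length n: functions nat => bit (GF(2)) vanishing outside {..<n}.\<close>

definition bvecs :: "nat \<Rightarrow> (nat \<Rightarrow> bit) set" where
  "bvecs n = {v. \<forall>i. n \<le> i \<longrightarrow> v i = 0}"

definition binary_linear_code :: "nat \<Rightarrow> (nat \<Rightarrow> bit) set \<Rightarrow> bool" where
  "binary_linear_code n C \<longleftrightarrow> C \<subseteq> bvecs n \<and> (\<lambda>_. 0) \<in> C \<and>
     (\<forall>x\<in>C. \<forall>y\<in>C. x + y \<in> C) \<and> (\<forall>a::bit. \<forall>x\<in>C. (\<lambda>i. a * x i) \<in> C)"

definition hamming_weight :: "nat \<Rightarrow> (nat \<Rightarrow> bit) \<Rightarrow> nat" where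
  "hamming_weight n v = card {i. i < n \<and> v i \<noteq> 0}"

definition hamming_dist :: "nat \<Rightarrow> (nat \<Rightarrow> bit) \<Rightarrow> (nat \<Rightarrow> bit) \<Rightarrow> nat" where
  "hamming_dist n x y = card {i. i < n \<and> x i \<noteq> y i}"

definition min_dist :: "nat \<Rightarrow> (nat \<Rightarrow> bit) set \<Rightarrow> nat" where
  "min_dist n C = Inf {hamming_dist n x y | x y. x \<in> C \<and> y \<in> C \<and> x \<noteq> y}"

definition bdot :: "nat \<Rightarrow> (nat \<Rightarrow> bit) \<Rightarrow> (nat \<Rightarrow> bit) \<Rightarrow> bit" where
  "bdot n x y = (\<Sum>i<n. x i * y i)"

definition dual_code :: "nat \<Rightarrow> (nat \<Rightarrow> bit) set \<Rightarrow> (nat \<Rightarrow> bit) set" where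
  "dual_code n C = {y \<in> bvecs n. \<forall>x\<in>C. bdot n x y = 0}"

text \<open>A matrix is a list of rows; its row space over GF(2) is the set of sums of sub-multisets
  (subsets of row indices) of rows.\<close>
definition row_span :: "(nat \<Rightarrow> bit) list \<Rightarrow> (nat \<Rightarrow> bit) set" where
  "row_span H = {(\<Sum>i\<in>S. H ! i) | S. S \<subseteq> {..<length H}}"

definition parity_check_matrix :: "nat \<Rightarrow> (nat \<Rightarrow> bit) set \<Rightarrow> (nat \<Rightarrow> bit) list \<Rightarrow> bool" where
  "parity_check_matrix n C H \<longleftrightarrow> set H \<subseteq> bvecs n \<and> row_span H = dual_code n C"

definition stopping_ok :: "nat \<Rightarrow> (nat \<Rightarrow> bit) list \<Rightarrow> nat \<Rightarrow> bool" where
  "stopping_ok n H s \<longleftrightarrow> (\<forall>S. S \<subseteq> {..<n} \<and> S \<noteq> {} \<and> card S < s \<longrightarrow>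
       (\<exists>h\<in>set H. card {j \<in> S. h j \<noteq> 0} = 1))"

definition stopping_distance :: "nat \<Rightarrow> (nat \<Rightarrow> bit) list \<Rightarrow> nat" where
  "stopping_distance n H = (GREATEST s. stopping_ok n H s)"

definition redundancy :: "nat \<Rightarrow> (nat \<Rightarrow> bit) set \<Rightarrow> nat" where
  "redundancy n C = (LEAST m. \<exists>H. parity_check_matrix n C H \<and> length H = m)"

definition stopping_redundancy :: "nat \<Rightarrow> (nat \<Rightarrow> bit) set \<Rightarrow> nat" where
  "stopping_redundancy n C = (LEAST m. \<exists>H. parity_check_matrix n C H \<and> length H = m
      \<and> stopping_distance n H = min_dist n C)"

end

theory Submission
  imports Defs "HOL.Vector_Spaces"
begin


definition sc :: "bit \<Rightarrow> (nat \<Rightarrow> bit) \<Rightarrow> (nat \<Rightarrow> bit)" where "sc a v = (\<lambda>i. a * v i)"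

interpretation bv: vector_space sc
  by unfold_locales (auto simp: sc_def fun_eq_iff algebra_simps)

interpretation bb: vector_space "(*) :: bit \<Rightarrow> bit \<Rightarrow> bit"
  by unfold_locales (auto simp: algebra_simps)

interpretation bvp: vector_space_pair sc "(*) :: bit \<Rightarrow> bit \<Rightarrow> bit" ..

lemma sum_fun_apply: "(\<Sum>i\<in>A. f i) x = (\<Sum>i\<in>A. (f i x :: 'b::comm_monoid_add))"
  by (induction A rule: infinite_finite_induct) auto

lemma bit_add_self[simp]: "(x::bit) + x = 0"
  by (cases x) auto

lemma fun_add_self[simp]: "(x::nat\<Rightarrow>bit) + x = 0"
  by (auto simp: fun_eq_iff)

lemma bit_sum_card: "finite S \<Longrightarrow> (\<Sum>i\<in>S. (h i::bit)) = of_nat (card {i\<in>S. h i \<noteq> 0})"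
proof -
  assume f: "finite S"
  have "(\<Sum>i\<in>S. h i) = (\<Sum>i\<in>{i\<in>S. h i \<noteq> 0}. h i)"
    using f by (intro sum.mono_neutral_right) auto
  also have "\<dots> = (\<Sum>i\<in>{i\<in>S. h i \<noteq> 0}. 1)" by (intro sum.cong) auto
  finally show ?thesis by simp
qed

definition unitv :: "nat \<Rightarrow> nat \<Rightarrow> bit" where "unitv i = (\<lambda>k. if k = i then 1 else 0)"

lemma bvecs_expand: "x \<in> bvecs n \<Longrightarrow> x = (\<Sum>i<n. sc (x i) (unitv i))"
proof (rule ext)
  fix k assume x: "x \<in> bvecs n"
  show "x k = (\<Sum>i<n. sc (x i) (unitv i)) k"
  proof (cases "k < n")
    case True
    have "(\<Sum>i<n. sc (x i) (unitv i)) k = (\<Sum>i<n. if i = k then x k else 0)"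
      unfolding sum_fun_apply by (intro sum.cong) (auto simp: sc_def unitv_def)
    also have "\<dots> = x k" using True by (simp add: sum.delta)
    finally show ?thesis by simp
  next
    case False
    then show ?thesis using x by (auto simp: sum_fun_apply sc_def unitv_def bvecs_def)
  qed
qed

lemma separation:
  assumes W: "W \<subseteq> bvecs n" "0 \<in> W" "\<forall>x\<in>W. \<forall>y\<in>W. x + y \<in> W"
    and v: "v \<in> bvecs n" "v \<notin> W"
  shows "\<exists>z\<in>bvecs n. (\<forall>w\<in>W. bdot n w z = 0) \<and> bdot n v z = 1"
proof -
  have sub: "bv.subspace W"
    unfolding bv.subspace_def
  proof (intro conjI ballI allI)
    show "0 \<in> W" by fact
    show "x + y \<in> W" if "x \<in> W" "y \<in> W" for x y using W that by blast
    show "sc c x \<in> W" if "x \<in> W" for c x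
    proof (cases c)
      case zero
      have "sc c x = 0" using zero by (auto simp: sc_def fun_eq_iff)
      then show ?thesis using W(2) by (simp only:)
    next
      case one
      have "sc c x = x" using one by (auto simp: sc_def fun_eq_iff)
      then show ?thesis using that by (simp only:)
    qed
  qed
  obtain B where B: "B \<subseteq> W" "bv.independent B" "W \<subseteq> bv.span B"
    using bv.maximal_independent_subset by blast
  have "bv.span B \<subseteq> W" using bv.span_minimal[OF B(1) sub] .
  then have "v \<notin> bv.span B" using v by blast
  then have ind: "bv.independent (insert v B)" using bv.independent_insertI B(2) by blast
  obtain g where g: "Vector_Spaces.linear sc (*) g" "\<forall>x\<in>insert v B. g x = (if x = v then 1 else 0)"
    using bvp.linear_independent_extend[OF ind, of "\<lambda>x. if x = v then 1 else 0"] by blast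
  interpret g: Vector_Spaces.linear sc "(*)" g by fact
  have gB: "\<forall>x\<in>B. g x = 0" using g(2) v B(1) by auto
  have "bv.span B \<subseteq> {x. g x = 0}"
    using bv.span_minimal[OF _ g.subspace_kernel] gB by blast
  then have gW: "\<forall>w\<in>W. g w = 0" using B(3) by blast
  define z where "z = (\<lambda>i. if i < n then g (unitv i) else 0)"
  have gx: "g x = bdot n x z" if "x \<in> bvecs n" for x
  proof -
    have "g x = g (\<Sum>i<n. sc (x i) (unitv i))" using bvecs_expand[OF that] by simp
    also have "\<dots> = (\<Sum>i<n. x i * g (unitv i))" by (simp add: g.sum g.scale)
    also have "\<dots> = bdot n x z" unfolding bdot_def z_def by (intro sum.cong) auto
    finally show ?thesis .
  qed
  have "z \<in> bvecs n" by (auto simp: z_def bvecs_def)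
  moreover have "\<forall>w\<in>W. bdot n w z = 0" using gW gx W(1) by (metis subsetD)
  moreover have "bdot n v z = 1" using gx[OF v(1)] g(2) by simp
  ultimately show ?thesis by blast
qed



declare add_bit_eq_xor[simp del] mult_bit_eq_and[simp del]

lemma bdot_add_left: "bdot n (x + y) z = bdot n x z + bdot n y z"
  unfolding bdot_def by (simp only: plus_fun_apply distrib_right sum.distrib)

lemma bdot_add_right: "bdot n z (x + y) = bdot n z x + bdot n z y"
  unfolding bdot_def by (simp only: plus_fun_apply distrib_left sum.distrib)

lemma bdot_comm: "bdot n x y = bdot n y x"
  unfolding bdot_def by (simp only: mult.commute)

lemma bdot_zero_right[simp]: "bdot n x 0 = 0"
  unfolding bdot_def by simp

lemma bvecs_add: "x \<in> bvecs n \<Longrightarrow> y \<in> bvecs n \<Longrightarrow> x + y \<in> bvecs n"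
  unfolding bvecs_def by auto

lemma bvecs_zero[simp]: "0 \<in> bvecs n"
  unfolding bvecs_def by auto

lemma dual_zero: "0 \<in> dual_code n C"
  unfolding dual_code_def by auto

lemma dual_add: "x \<in> dual_code n C \<Longrightarrow> y \<in> dual_code n C \<Longrightarrow> x + y \<in> dual_code n C"
  unfolding dual_code_def by (auto simp: bvecs_add bdot_add_right)

lemma code_zero: "binary_linear_code n C \<Longrightarrow> 0 \<in> C"
  unfolding binary_linear_code_def zero_fun_def by blast

lemma biorth:
  assumes C: "binary_linear_code n C" and c: "c \<in> bvecs n"
    and orth: "\<forall>y\<in>dual_code n C. bdot n c y = 0"
  shows "c \<in> C"
proof (rule ccontr)
  assume nc: "c \<notin> C"
  have W: "C \<subseteq> bvecs n" "0 \<in> C" "\<forall>x\<in>C. \<forall>y\<in>C. x + y \<in> C"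
    using C code_zero[OF C] unfolding binary_linear_code_def by blast+
  obtain z where z: "z \<in> bvecs n" "\<forall>w\<in>C. bdot n w z = 0" "bdot n c z = 1"
    using separation[OF W c nc] by blast
  then have "z \<in> dual_code n C" unfolding dual_code_def by blast
  then show False using orth z(3) by fastforce
qed

lemma RS_add:
  assumes "x \<in> row_span H" "y \<in> row_span H"
  shows "x + y \<in> row_span H"
proof -
  obtain S where S: "S \<subseteq> {..<length H}" "x = (\<Sum>i\<in>S. H ! i)"
    using assms(1) unfolding row_span_def by blast
  obtain T where T: "T \<subseteq> {..<length H}" "y = (\<Sum>i\<in>T. H ! i)"
    using assms(2) unfolding row_span_def by blast
  have fS: "finite S" "finite T" using S(1) T(1) finite_subset by auto
  have a: "x = (\<Sum>i\<in>S \<inter> T. H ! i) + (\<Sum>i\<in>S - T. H ! i)"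
    using S(2) fS by (simp add: sum.Int_Diff)
  have b: "y = (\<Sum>i\<in>T \<inter> S. H ! i) + (\<Sum>i\<in>T - S. H ! i)"
    using T(2) fS by (simp add: sum.Int_Diff)
  have c: "(\<Sum>i\<in>(S - T) \<union> (T - S). H ! i) = (\<Sum>i\<in>S - T. H ! i) + (\<Sum>i\<in>T - S. H ! i)"
    using fS by (intro sum.union_disjoint) auto
  have "x + y = (\<Sum>i\<in>(S - T) \<union> (T - S). H ! i)"
  proof -
    have "x + y = ((\<Sum>i\<in>S \<inter> T. H ! i) + (\<Sum>i\<in>S \<inter> T. H ! i)) + ((\<Sum>i\<in>S - T. H ! i) + (\<Sum>i\<in>T - S. H ! i))"
      unfolding a b by (simp only: Int_commute add.assoc add.left_commute)
    also have "\<dots> = (\<Sum>i\<in>S - T. H ! i) + (\<Sum>i\<in>T - S. H ! i)" by (simp only: fun_add_self add_0)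
    finally show ?thesis using c by simp
  qed
  moreover have "(S - T) \<union> (T - S) \<subseteq> {..<length H}" using S(1) T(1) by auto
  ultimately show ?thesis unfolding row_span_def by blast
qed

lemma RS_mem: "i < length H \<Longrightarrow> H ! i \<in> row_span H"
  unfolding row_span_def by (rule CollectI, rule exI[of _ "{i}"]) auto

lemma RS_set: "set H \<subseteq> row_span H"
  using RS_mem by (metis in_set_conv_nth subsetI)

lemma RS_zero: "0 \<in> row_span H"
  unfolding row_span_def by (rule CollectI, rule exI[of _ "{}"]) auto

lemma RS_sub:
  assumes V: "0 \<in> V" "\<forall>x\<in>V. \<forall>y\<in>V. x + y \<in> V" and H: "set H \<subseteq> V"
  shows "row_span H \<subseteq> V"
proof
  fix x assume "x \<in> row_span H"
  then obtain S where S: "S \<subseteq> {..<length H}" "x = (\<Sum>i\<in>S. H ! i)"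
    unfolding row_span_def by blast
  have "finite S" using S(1) finite_subset by auto
  have "(\<Sum>i\<in>S. H ! i) \<in> V"
    using \<open>finite S\<close> S(1)
  proof (induction S rule: finite_induct)
    case empty then show ?case using V(1) by (simp only: sum.empty)
  next
    case (insert a F)
    have "H ! a \<in> V" using insert.prems H by (auto simp: subset_iff)
    moreover have "(\<Sum>i\<in>insert a F. H ! i) = H ! a + (\<Sum>i\<in>F. H ! i)"
      using insert.hyps by (rule sum.insert)
    ultimately show ?case using insert.IH insert.prems V(2) by (metis insert_subset)
  qed
  then show "x \<in> V" using S by simp
qed

definition proj :: "nat set \<Rightarrow> (nat \<Rightarrow> bit) \<Rightarrow> (nat \<Rightarrow> bit)" where
  "proj S v = (\<lambda>k. if k \<in> S then v k else 0)"

lemma proj_add: "proj S (x + y) = proj S x + proj S y"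
  by (auto simp: proj_def fun_eq_iff)

lemma proj_zero[simp]: "proj S 0 = 0"
  by (auto simp: proj_def fun_eq_iff)

lemma proj_sum: "proj S (\<Sum>i\<in>A. f i) = (\<Sum>i\<in>A. proj S (f i))"
proof (induction A rule: infinite_finite_induct)
  case (infinite A) then show ?case by (metis sum.infinite proj_zero)
next
  case empty then show ?case by (simp only: sum.empty proj_zero)
next
  case (insert x F)
  have "proj S (sum f (insert x F)) = proj S (f x + sum f F)" by (simp only: sum.insert[OF insert.hyps])
  also have "\<dots> = proj S (f x) + (\<Sum>i\<in>F. proj S (f i))" by (simp only: proj_add insert.IH)
  also have "\<dots> = (\<Sum>i\<in>insert x F. proj S (f i))" by (simp only: sum.insert[OF insert.hyps])
  finally show ?case .
qed

lemma sc_bit: "sc a v = (if a = 1 then v else 0)"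
  by (cases a) (auto simp: sc_def fun_eq_iff)

lemma unitv_self: "unitv j j = 1"
  by (simp add: unitv_def)

lemma core:
  assumes C: "binary_linear_code n C" and H0: "dual_code n C = row_span H0"
    and S: "S \<subseteq> {..<n}" "S \<noteq> {}"
    and noC: "\<And>w. w \<in> C \<Longrightarrow> w \<noteq> 0 \<Longrightarrow> \<exists>k. k \<notin> S \<and> w k \<noteq> 0"
    and m: "1 \<le> m" "card S \<le> m + 1"
  shows "\<exists>T \<subseteq> {..<length H0}. T \<noteq> {} \<and> card T \<le> m \<and> card {k\<in>S. (\<Sum>i\<in>T. H0 ! i) k \<noteq> 0} = 1"
proof -
  have fS: "finite S" using S finite_subset by blast
  define W where "W = proj S ` dual_code n C"
  have W1: "W \<subseteq> bvecs n"
  proof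
    fix x assume "x \<in> W"
    then obtain y where "x = proj S y" unfolding W_def by blast
    then show "x \<in> bvecs n" using S unfolding bvecs_def proj_def by auto
  qed
  have "proj S 0 \<in> W" unfolding W_def using dual_zero by (rule imageI)
  then have W2: "0 \<in> W" by (simp only: proj_zero)
  have W3: "\<forall>x\<in>W. \<forall>y\<in>W. x + y \<in> W"
  proof (intro ballI)
    fix x y assume "x \<in> W" "y \<in> W"
    then obtain a b where ab: "a \<in> dual_code n C" "b \<in> dual_code n C" "x = proj S a" "y = proj S b"
      unfolding W_def by blast
    then have "x + y = proj S (a + b)" by (simp only: proj_add)
    moreover have "a + b \<in> dual_code n C" using ab dual_add by blast
    ultimately show "x + y \<in> W" unfolding W_def by blast
  qed
  note W = W1 W2 W3
  have unit_in_W: "unitv j \<in> W" if j: "j \<in> S" for j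
  proof (rule ccontr)
    assume nW: "unitv j \<notin> W"
    have jn: "j < n" using j S by auto
    have "unitv j \<in> bvecs n" using jn by (auto simp: unitv_def bvecs_def)
    then obtain z where z: "z \<in> bvecs n" "\<forall>w\<in>W. bdot n w z = 0" "bdot n (unitv j) z = 1"
      using separation[OF W _ nW] by blast
    have "bdot n (unitv j) z = (\<Sum>i<n. if i = j then z j else 0)"
      unfolding bdot_def by (intro sum.cong) (auto simp: unitv_def)
    also have "\<dots> = z j" using jn by simp
    finally have zj: "z j = 1" using z(3) by simp
    define z' where "z' = proj S z"
    have bz: "bdot n z' y = bdot n (proj S y) z" for y
      unfolding bdot_def z'_def proj_def by (intro sum.cong) auto
    have z'b: "z' \<in> bvecs n" using S by (auto simp: z'_def proj_def bvecs_def)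
    have "\<forall>y\<in>dual_code n C. bdot n z' y = 0" using bz z(2) unfolding W_def by auto
    then have z'C: "z' \<in> C" using biorth[OF C z'b] by blast
    have z'j: "z' j = 1" using zj j by (simp add: z'_def proj_def)
    then have "z' \<noteq> 0" by auto
    then obtain k where "k \<notin> S" "z' k \<noteq> 0" using noC z'C by blast
    then show False by (simp add: z'_def proj_def)
  qed
  define B0 where "B0 = proj S ` set H0"
  have WB0: "W \<subseteq> bv.span B0"
  proof
    fix w assume "w \<in> W"
    then obtain y where y: "y \<in> row_span H0" "w = proj S y" using H0 unfolding W_def by blast
    then obtain T where T: "T \<subseteq> {..<length H0}" "y = (\<Sum>i\<in>T. H0 ! i)" unfolding row_span_def by blast
    have "w = (\<Sum>i\<in>T. proj S (H0 ! i))" using y T by (simp add: proj_sum)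
    also have "\<dots> \<in> bv.span B0"
    proof (rule bv.span_sum)
      fix i assume "i \<in> T"
      then have "proj S (H0 ! i) \<in> B0" using T unfolding B0_def by auto
      then show "proj S (H0 ! i) \<in> bv.span B0" by (rule bv.span_base)
    qed
    finally show "w \<in> bv.span B0" .
  qed
  obtain B where B: "B \<subseteq> B0" "bv.independent B" "B0 \<subseteq> bv.span B"
    using bv.maximal_independent_subset by blast
  have finB: "finite B" using B(1) unfolding B0_def by (meson finite_imageI finite_set finite_subset)
  have "bv.span B0 \<subseteq> bv.span B" using bv.span_minimal[OF B(3) bv.subspace_span] .
  then have uB: "unitv j \<in> bv.span B" if "j \<in> S" for j using unit_in_W[OF that] WB0 by blast
  have BE: "B \<subseteq> bv.span (unitv ` S)"
  proof
    fix b assume "b \<in> B"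
    then obtain v where bv: "b = proj S v" using B(1) unfolding B0_def by blast
    have "b = (\<Sum>k\<in>S. sc (b k) (unitv k))"
    proof (rule ext)
      fix k'
      show "b k' = (\<Sum>k\<in>S. sc (b k) (unitv k)) k'"
      proof (cases "k' \<in> S")
        case True
        have "(\<Sum>k\<in>S. sc (b k) (unitv k)) k' = (\<Sum>k\<in>S. if k = k' then b k' else 0)"
          unfolding sum_fun_apply by (intro sum.cong) (auto simp: sc_def unitv_def)
        also have "\<dots> = b k'" using True fS by simp
        finally show ?thesis by simp
      next
        case False
        have "(\<Sum>k\<in>S. sc (b k) (unitv k)) k' = (\<Sum>k\<in>S. 0)"
          unfolding sum_fun_apply by (intro sum.cong) (use False in \<open>auto simp: sc_def unitv_def\<close>)
        moreover have "b k' = 0" using bv False by (simp add: proj_def)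
        ultimately show ?thesis by simp
      qed
    qed
    also have "\<dots> \<in> bv.span (unitv ` S)"
      by (intro bv.span_sum bv.span_scale bv.span_base) auto
    finally show "b \<in> bv.span (unitv ` S)" .
  qed
  have cardB: "card B \<le> card S"
    using bv.independent_span_bound[OF finite_imageI[OF fS] B(2) BE] card_image_le[OF fS, of unitv]
    by linarith
  have rep: "\<exists>Bj \<subseteq> B. unitv j = (\<Sum>v\<in>Bj. v)" if jS: "j \<in> S" for j
  proof -
    obtain u where u: "unitv j = (\<Sum>v\<in>B. sc (u v) v)"
      using uB[OF jS] unfolding bv.span_finite[OF finB] by blast
    also have "\<dots> = (\<Sum>v\<in>B. if u v = 1 then v else 0)"
      by (intro sum.cong) (simp_all only: sc_bit)
    also have "\<dots> = (\<Sum>v\<in>{v\<in>B. u v = 1}. v)" using finB by (rule sum.inter_filter[symmetric])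
    finally have "unitv j = (\<Sum>v\<in>{v\<in>B. u v = 1}. v)" .
    moreover have "{v\<in>B. u v = 1} \<subseteq> B" by blast
    ultimately show ?thesis by blast
  qed
  have "\<forall>v\<in>B. \<exists>i. i < length H0 \<and> proj S (H0 ! i) = v"
  proof
    fix v assume "v \<in> B"
    then have "v \<in> proj S ` set H0" using B(1) B0_def by blast
    then obtain h where h: "h \<in> set H0" "v = proj S h" by blast
    then obtain i where "i < length H0" "H0 ! i = h" by (metis in_set_conv_nth)
    then show "\<exists>i. i < length H0 \<and> proj S (H0 ! i) = v" using h by blast
  qed
  from bchoice[OF this] obtain idx where idx: "\<forall>v\<in>B. idx v < length H0 \<and> proj S (H0 ! idx v) = v"
    by blast
  have inj: "inj_on idx B" by (rule inj_onI) (metis idx)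
  have mk: "\<exists>T \<subseteq> {..<length H0}. T \<noteq> {} \<and> card T \<le> m \<and> card {k\<in>S. (\<Sum>i\<in>T. H0 ! i) k \<noteq> 0} = 1"
    if j: "j \<in> S" and Bj: "Bj \<subseteq> B" "unitv j = (\<Sum>v\<in>Bj. v)" "card Bj \<le> m" for j Bj
  proof (intro exI[of _ "idx ` Bj"] conjI)
    show "idx ` Bj \<subseteq> {..<length H0}" using idx Bj(1) by auto
    have "Bj \<noteq> {}" using Bj(2) unitv_self[of j] by auto
    then show "idx ` Bj \<noteq> {}" by simp
    have ci: "card (idx ` Bj) = card Bj" using inj Bj(1) by (meson card_image inj_on_subset)
    then show "card (idx ` Bj) \<le> m" using Bj(3) by simp
    have "proj S (\<Sum>i\<in>idx ` Bj. H0 ! i) = (\<Sum>i\<in>idx ` Bj. proj S (H0 ! i))" by (rule proj_sum)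
    also have "\<dots> = (\<Sum>v\<in>Bj. proj S (H0 ! idx v))"
      using inj Bj(1) by (subst sum.reindex) (auto intro: inj_on_subset)
    also have "\<dots> = (\<Sum>v\<in>Bj. v)" using idx Bj(1) by (intro sum.cong) auto
    finally have ph: "proj S (\<Sum>i\<in>idx ` Bj. H0 ! i) = unitv j" using Bj(2) by simp
    have "{k\<in>S. (\<Sum>i\<in>idx ` Bj. H0 ! i) k \<noteq> 0} = {k\<in>S. proj S (\<Sum>i\<in>idx ` Bj. H0 ! i) k \<noteq> 0}"
      by (auto simp: proj_def)
    also have "\<dots> = {j}" unfolding ph using j by (auto simp: unitv_def)
    finally show "card {k\<in>S. (\<Sum>i\<in>idx ` Bj. H0 ! i) k \<noteq> 0} = 1" by simp
  qed
  show ?thesis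
  proof (cases "card B \<le> m")
    case True
    obtain j where j: "j \<in> S" using S(2) by blast
    obtain Bj where "Bj \<subseteq> B" "unitv j = (\<Sum>v\<in>Bj. v)" using rep[OF j] by blast
    moreover have "card Bj \<le> m" using card_mono[OF finB \<open>Bj \<subseteq> B\<close>] True by simp
    ultimately show ?thesis using mk[OF j] by blast
  next
    case False
    then have cB: "card B = m + 1" "card S = m + 1" using cardB m by auto
    then have "card S \<ge> 2" using m by simp
    then have "\<not> card S \<le> Suc 0" by simp
    then have "\<not> (\<forall>a\<in>S. \<forall>b\<in>S. a = b)" using card_le_Suc0_iff_eq[OF fS] by blast
    then obtain j1 j2 where j12: "j1 \<in> S" "j2 \<in> S" "j1 \<noteq> j2" by blast
    obtain B1 where B1: "B1 \<subseteq> B" "unitv j1 = (\<Sum>v\<in>B1. v)" using rep[OF j12(1)] by blast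
    obtain B2 where B2: "B2 \<subseteq> B" "unitv j2 = (\<Sum>v\<in>B2. v)" using rep[OF j12(2)] by blast
    show ?thesis
    proof (cases "card B1 \<le> m")
      case True then show ?thesis using mk[OF j12(1) B1] by blast
    next
      case F1: False
      show ?thesis
      proof (cases "card B2 \<le> m")
        case True then show ?thesis using mk[OF j12(2) B2] by blast
      next
        case F2: False
        have "B1 = B" using card_subset_eq[OF finB B1(1)] F1 card_mono[OF finB B1(1)] cB by simp
        moreover have "B2 = B" using card_subset_eq[OF finB B2(1)] F2 card_mono[OF finB B2(1)] cB by simp
        ultimately have "unitv j1 = unitv j2" using B1 B2 by simp
        then have "unitv j1 j1 = unitv j2 j1" by simp
        then show ?thesis using j12(3) by (simp add: unitv_def)
      qed
    qed
  qed
qed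

definition indv :: "nat set \<Rightarrow> nat \<Rightarrow> bit" where
  "indv S = (\<lambda>i. if i \<in> S then 1 else 0)"

lemma bit_neq0: "(b::bit) \<noteq> 0 \<longleftrightarrow> b = 1"
  by (cases b) auto

lemma bvecs_indv: "bvecs n = indv ` Pow {..<n}"
proof
  show "bvecs n \<subseteq> indv ` Pow {..<n}"
  proof
    fix v assume v: "v \<in> bvecs n"
    have "v = indv {i. i < n \<and> v i = 1}"
    proof (rule ext)
      fix i show "v i = indv {i. i < n \<and> v i = 1} i"
        using v unfolding bvecs_def indv_def by (cases "v i") (auto simp: not_less)
    qed
    moreover have "{i. i < n \<and> v i = 1} \<in> Pow {..<n}" by auto
    ultimately show "v \<in> indv ` Pow {..<n}" by blast
  qed
  show "indv ` Pow {..<n} \<subseteq> bvecs n"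
    by (auto simp: indv_def bvecs_def)
qed

lemma bvecs_finite: "finite (bvecs n)"
  unfolding bvecs_indv by simp

lemma card_bvecs: "2 ^ n \<le> card (bvecs n)"
proof -
  have "inj_on indv (Pow {..<n})"
  proof (rule inj_onI)
    fix A B assume "A \<in> Pow {..<n}" "B \<in> Pow {..<n}" and eq: "indv A = indv B"
    have "(i \<in> A) = (i \<in> B)" for i
      using fun_cong[OF eq, of i] by (auto simp: indv_def split: if_splits)
    then show "A = B" by blast
  qed
  then have "card (Pow {..<n::nat}) \<le> card (bvecs n)"
    by (rule card_inj_on_le) (simp_all add: bvecs_indv bvecs_finite)
  then show ?thesis by (simp add: card_Pow)
qed

lemma card_row_span: "card (row_span H) \<le> 2 ^ length H"
proof -
  have "row_span H = (\<lambda>S. \<Sum>i\<in>S. H ! i) ` Pow {..<length H}"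
    unfolding row_span_def by auto
  then have "card (row_span H) \<le> card (Pow {..<length H})"
    by (metis card_image_le finite_Pow_iff finite_lessThan)
  then show ?thesis by (simp add: card_Pow)
qed

lemma card_Ts:
  "card {T. T \<subseteq> {..<r} \<and> 1 \<le> card T \<and> card T \<le> m} = (\<Sum>i=1..m. (r::nat) choose i)"
proof -
  have "{T. T \<subseteq> {..<r} \<and> 1 \<le> card T \<and> card T \<le> m} = (\<Union>k\<in>{1..m}. {T. T \<subseteq> {..<r} \<and> card T = k})"
    by auto
  also have "card \<dots> = (\<Sum>k\<in>{1..m}. card {T. T \<subseteq> {..<r} \<and> card T = k})"
  proof (rule card_UN_disjoint)
    show "finite {1..m}" by simp
    show "\<forall>i\<in>{1..m}. finite {T. T \<subseteq> {..<r} \<and> card T = i}"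
      by (auto intro: finite_subset[of _ "Pow {..<r}"])
    show "\<forall>i\<in>{1..m}. \<forall>j\<in>{1..m}. i \<noteq> j \<longrightarrow>
      {T. T \<subseteq> {..<r} \<and> card T = i} \<inter> {T. T \<subseteq> {..<r} \<and> card T = j} = {}" by auto
  qed
  also have "\<dots> = (\<Sum>k=1..m. r choose k)"
    by (intro sum.cong) (auto simp: n_subsets)
  finally show ?thesis .
qed

lemma degenerate_eq:
  assumes "\<forall>s. stopping_ok n H s"
  shows "stopping_distance n H = Inf ({}::nat set)"
proof -
  have "stopping_distance n H = (THE x. True \<and> (\<forall>y. True \<longrightarrow> y \<le> x))"
    unfolding stopping_distance_def Greatest_def using assms by simp
  also have "(\<lambda>x::nat. True \<and> (\<forall>y. True \<longrightarrow> y \<le> x)) = (\<lambda>x. x \<in> {} \<and> (\<forall>y. y \<in> {} \<longrightarrow> x \<le> y))"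
    by (auto intro!: ext) (metis Suc_n_not_le_n)
  also have "(THE x. x \<in> {} \<and> (\<forall>y. y \<in> {} \<longrightarrow> x \<le> y)) = Inf ({}::nat set)"
    unfolding Inf_nat_def Least_def ..
  finally show ?thesis .
qed

theorem theorem4:
  fixes n :: nat and C :: "(nat \<Rightarrow> bit) set"
  assumes "binary_linear_code n C"
    and "min_dist n C \<ge> 3"
  shows "stopping_redundancy n C \<le> (\<Sum>i=1..min_dist n C - 2. redundancy n C choose i)"
proof -
  note Cl = assms(1)
  define d where "d = min_dist n C"
  define r where "r = redundancy n C"
  define D where "D = {hamming_dist n x y | x y. x \<in> C \<and> y \<in> C \<and> x \<noteq> y}"
  have dD: "d = Inf D" unfolding d_def min_dist_def D_def ..
  have d3: "d \<ge> 3" using assms(2) d_def by simp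
  have Cs: "C \<subseteq> bvecs n" using Cl unfolding binary_linear_code_def by blast
  have C0: "0 \<in> C" using code_zero[OF Cl] .
  have dualsub: "dual_code n C \<subseteq> bvecs n" unfolding dual_code_def by blast
  then have fdual: "finite (dual_code n C)" using bvecs_finite finite_subset by blast
  obtain L where L: "set L = dual_code n C" using finite_list[OF fdual] by blast
  have "row_span L \<subseteq> dual_code n C"
    using RS_sub[of "dual_code n C" L] dual_zero dual_add L by blast
  moreover have "dual_code n C \<subseteq> row_span L" using RS_set L by blast
  ultimately have pcL: "parity_check_matrix n C L"
    unfolding parity_check_matrix_def using L dualsub by blast
  have "\<exists>H. parity_check_matrix n C H \<and> length H = r"
    unfolding r_def redundancy_def
    by (rule LeastI_ex[where P="\<lambda>m. \<exists>H. parity_check_matrix n C H \<and> length H = m"]) (use pcL in blast)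
  then obtain H0 where H0: "parity_check_matrix n C H0" "length H0 = r" by blast
  have H0rs: "dual_code n C = row_span H0" using H0(1) unfolding parity_check_matrix_def by simp
  have sr_le: "stopping_redundancy n C \<le> length H"
    if "parity_check_matrix n C H" "stopping_distance n H = d" for H
    unfolding stopping_redundancy_def d_def using that d_def by (intro Least_le) blast
  show ?thesis
  proof (cases "D = {}")
    case True
    have Cz: "C = {0}"
    proof
      show "C \<subseteq> {0}"
      proof
        fix x assume "x \<in> C"
        show "x \<in> {0}"
        proof (rule ccontr)
          assume "x \<notin> {0}"
          then have "hamming_dist n x 0 \<in> D" unfolding D_def using \<open>x \<in> C\<close> C0 by blast
          then show False using True by blast
        qed
      qed
      show "{0} \<subseteq> C" using C0 by blast
    qed
    have dualb: "dual_code n C = bvecs n"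
      unfolding dual_code_def Cz by (auto simp: bdot_comm[of n 0])
    define H where "H = map unitv [0..<n]"
    have setH: "set H = unitv ` {..<n}" unfolding H_def by auto
    have setHb: "set H \<subseteq> bvecs n" unfolding setH by (auto simp: unitv_def bvecs_def)
    have "row_span H \<subseteq> bvecs n"
    proof (rule RS_sub[OF bvecs_zero _ setHb])
      show "\<forall>x\<in>bvecs n. \<forall>y\<in>bvecs n. x + y \<in> bvecs n" using bvecs_add by blast
    qed
    moreover have "bvecs n \<subseteq> row_span H"
    proof
      fix x assume x: "x \<in> bvecs n"
      define I where "I = {i. i < n \<and> x i = 1}"
      have "x = (\<Sum>i\<in>I. unitv i)"
      proof (rule ext)
        fix k
        have "(\<Sum>i\<in>I. unitv i) k = (\<Sum>i\<in>I. if i = k then 1 else 0)"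
          unfolding sum_fun_apply by (intro sum.cong) (auto simp: unitv_def)
        also have "\<dots> = (if k \<in> I then 1 else 0)" by (simp add: I_def)
        also have "\<dots> = x k"
        proof (cases "k < n")
          case True then show ?thesis by (cases "x k") (simp_all add: I_def)
        next
          case False
          then have "x k = 0" using x unfolding bvecs_def by simp
          moreover have "k \<notin> I" using False unfolding I_def by simp
          ultimately show ?thesis by simp
        qed
        finally show "x k = (\<Sum>i\<in>I. unitv i) k" by simp
      qed
      also have "\<dots> = (\<Sum>i\<in>I. H ! i)" by (rule sum.cong[OF refl]) (simp add: H_def I_def)
      also have "\<dots> \<in> row_span H" unfolding row_span_def
        by (rule CollectI, rule exI[of _ I]) (auto simp: I_def H_def)
      finally show "x \<in> row_span H" .
    qed
    ultimately have pcH: "parity_check_matrix n C H"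
      unfolding parity_check_matrix_def dualb using setHb by blast
    have allok: "\<forall>s. stopping_ok n H s"
      unfolding stopping_ok_def
    proof (intro allI impI)
      fix s S assume S: "S \<subseteq> {..<n} \<and> S \<noteq> {} \<and> card S < s"
      then obtain j where j: "j \<in> S" by blast
      have "unitv j \<in> set H" using j S unfolding setH by auto
      moreover have "{k \<in> S. unitv j k \<noteq> 0} = {j}" using j by (auto simp: unitv_def)
      moreover then have "card {k \<in> S. unitv j k \<noteq> 0} = 1" by simp
      ultimately show "\<exists>h\<in>set H. card {j \<in> S. h j \<noteq> 0} = 1" by blast
    qed
    have "stopping_distance n H = d" unfolding dD True using degenerate_eq[OF allok] .
    then have "stopping_redundancy n C \<le> n" using sr_le[OF pcH] unfolding H_def by simp
    also have "n \<le> r"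
    proof -
      have "(2::nat) ^ n \<le> card (bvecs n)" by (rule card_bvecs)
      also have "\<dots> = card (row_span H0)" using H0rs dualb by simp
      also have "\<dots> \<le> 2 ^ r" using card_row_span[of H0] H0(2) by simp
      finally show ?thesis by simp
    qed
    also have "r = (r choose 1)" by simp
    also have "\<dots> \<le> (\<Sum>i=1..d - 2. r choose i)"
      by (rule member_le_sum) (use d3 in auto)
    finally show ?thesis unfolding d_def r_def .
  next
    case False
    have dmem: "d \<in> D" unfolding dD using Inf_nat_def1[OF False] .
    have dlow: "d \<le> e" if "e \<in> D" for e unfolding dD using that by (simp add: Inf_nat_def Least_le)
    have noC: "\<exists>k. k \<notin> S \<and> w k \<noteq> 0"
      if S: "S \<subseteq> {..<n}" "card S < d" and w: "w \<in> C" "w \<noteq> 0" for S w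
    proof (rule ccontr)
      assume "\<not> (\<exists>k. k \<notin> S \<and> w k \<noteq> 0)"
      then have sub: "{i. i < n \<and> w i \<noteq> 0} \<subseteq> S" by blast
      have fS: "finite S" using S(1) finite_subset by blast
      have "hamming_dist n w 0 = card {i. i < n \<and> w i \<noteq> 0}" unfolding hamming_dist_def by simp
      also have "\<dots> \<le> card S" using card_mono[OF fS sub] .
      finally have "hamming_dist n w 0 < d" using S(2) by simp
      moreover have "hamming_dist n w 0 \<in> D" unfolding D_def using w C0 by blast
      ultimately show False using dlow by fastforce
    qed
    define m where "m = d - 2"
    have m1: "1 \<le> m" using d3 m_def by simp
    define Ts where "Ts = {T. T \<subseteq> {..<r} \<and> 1 \<le> card T \<and> card T \<le> m}"
    define R where "R = (\<lambda>T. \<Sum>i\<in>T. H0 ! i) ` Ts"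
    have fTs: "finite Ts" unfolding Ts_def by (rule finite_subset[of _ "Pow {..<r}"]) auto
    then have fR: "finite R" unfolding R_def by simp
    obtain H where H: "set H = R" "distinct H" using finite_distinct_list[OF fR] by blast
    have lenH: "length H \<le> (\<Sum>i=1..m. r choose i)"
    proof -
      have "length H = card R" using H distinct_card by metis
      also have "\<dots> \<le> card Ts" unfolding R_def using fTs by (rule card_image_le)
      also have "\<dots> = (\<Sum>i=1..m. r choose i)" unfolding Ts_def by (rule card_Ts)
      finally show ?thesis .
    qed
    have Rdual: "R \<subseteq> dual_code n C"
      unfolding R_def Ts_def H0rs row_span_def using H0(2) by auto
    have "row_span H \<subseteq> dual_code n C"
      using RS_sub[of "dual_code n C" H] dual_zero dual_add Rdual H(1) by blast
    moreover have "dual_code n C \<subseteq> row_span H"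
    proof -
      have "set H0 \<subseteq> row_span H"
      proof
        fix h assume "h \<in> set H0"
        then obtain i where i: "i < length H0" "h = H0 ! i" by (metis in_set_conv_nth)
        have "{i} \<in> Ts" unfolding Ts_def using i H0(2) m1 by auto
        then have "(\<Sum>k\<in>{i}. H0 ! k) \<in> R" unfolding R_def by (rule imageI)
        then have "h \<in> set H" using i H(1) by simp
        then show "h \<in> row_span H" using RS_set by blast
      qed
      then have "row_span H0 \<subseteq> row_span H"
        using RS_sub[of "row_span H" H0] RS_zero RS_add by blast
      then show ?thesis using H0rs by simp
    qed
    ultimately have rsH: "row_span H = dual_code n C" by blast
    have pcH: "parity_check_matrix n C H"
      unfolding parity_check_matrix_def using rsH RS_set dualsub by blast
    have okd: "stopping_ok n H d"
      unfolding stopping_ok_def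
    proof (intro allI impI)
      fix S assume S: "S \<subseteq> {..<n} \<and> S \<noteq> {} \<and> card S < d"
      have cSd: "card S < d" using S by blast
      have "card S \<le> m + 1" using cSd d3 unfolding m_def by linarith
      then obtain T where T: "T \<subseteq> {..<length H0}" "T \<noteq> {}" "card T \<le> m"
          "card {k\<in>S. (\<Sum>i\<in>T. H0 ! i) k \<noteq> 0} = 1"
        using core[OF Cl H0rs _ _ _ m1, of S] S noC[of S] by blast
      have "finite T" using T(1) finite_subset by blast
      then have "1 \<le> card T" using T(2) by (simp add: Suc_le_eq card_gt_0_iff)
      then have "T \<in> Ts" unfolding Ts_def using T H0(2) by auto
      then have "(\<Sum>i\<in>T. H0 ! i) \<in> set H" unfolding H(1) R_def by (rule imageI)
      then show "\<exists>h\<in>set H. card {j \<in> S. h j \<noteq> 0} = 1" using T(4) by blast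
    qed
    have upper: "s \<le> d" if ok: "stopping_ok n H s" for s
    proof (rule ccontr)
      assume "\<not> s \<le> d"
      then have ds: "d < s" by simp
      obtain x y where xy: "x \<in> C" "y \<in> C" "x \<noteq> y" "hamming_dist n x y = d"
        using dmem unfolding D_def by blast
      define S where "S = {i. i < n \<and> x i \<noteq> y i}"
      have cS: "card S = d" using xy(4) unfolding S_def hamming_dist_def .
      have S1: "S \<subseteq> {..<n}" unfolding S_def by auto
      have S2: "S \<noteq> {}" using cS d3 by auto
      obtain h where h: "h \<in> set H" "card {j \<in> S. h j \<noteq> 0} = 1"
        using ok S1 S2 cS ds unfolding stopping_ok_def by blast
      have hd: "h \<in> dual_code n C" using h(1) H(1) Rdual by blast
      have fS: "finite S" using S1 finite_subset by blast
      have "(\<Sum>i\<in>S. h i) = of_nat 1" using bit_sum_card[OF fS, of h] h(2) by simp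
      then have s1: "(\<Sum>i\<in>S. h i) = 1" by simp
      have "bdot n (x + y) h = bdot n x h + bdot n y h" by (rule bdot_add_left)
      also have "\<dots> = 0" using hd xy(1,2) unfolding dual_code_def by simp
      finally have b0: "bdot n (x + y) h = 0" .
      have "bdot n (x + y) h = (\<Sum>i<n. if i \<in> S then h i else 0)"
        unfolding bdot_def
      proof (intro sum.cong refl)
        fix i assume "i \<in> {..<n}"
        show "(x + y) i * h i = (if i \<in> S then h i else 0)"
        proof (cases "x i = y i")
          case True then show ?thesis unfolding S_def by simp
        next
          case False
          then have "x i + y i = 1" by (cases "x i"; cases "y i") auto
          then show ?thesis using False \<open>i \<in> {..<n}\<close> unfolding S_def by simp
        qed
      qed
      also have "\<dots> = (\<Sum>i\<in>S. h i)"
        using S1 by (simp add: sum.If_cases Int_absorb1)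
      finally show False using b0 s1 by simp
    qed
    have "stopping_distance n H = d"
      unfolding stopping_distance_def using okd upper by (rule Greatest_equality)
    then have "stopping_redundancy n C \<le> length H" using sr_le[OF pcH] by simp
    also have "\<dots> \<le> (\<Sum>i=1..m. r choose i)" by (rule lenH)
    finally show ?thesis unfolding m_def d_def r_def .
  qed
qed

end
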